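(* Let $G=(V,E)$ be a bispanning graph, $G'=(V',E')\subseteq G$ a subgraph which is itself bispanning, and $\overline{G}=(\overline V,\overline E)=G/G'$. (i) If $E=S\,\dot\cup\,T$ with $S,T$ disjoint spanning trees of $G$, then $S\cap E'$ and $T\cap E'$ are disjoint spanning trees of $G'$, and $S\cap\overline E$ and $T\cap\overline E$ are disjoint spanning trees of $\overline G$. (ii) If $S',T'$ are two disjoint spanning trees of $G'$ and $\overline S,\overline T$ are two disjoint spanning trees of $\overline G$, then $S'\,\dot\cup\,\overline S$ and $T'\,\dot\cup\,\overline T$ are two disjoint spanning trees of $G$.
   Context: Graphs are finite, undirected, may have parallel edges, no loops. A spanning tree of $H$ is an edge set $T$ such that $(V(H),T)$ is connected and acyclic; $H$ is bispanning if its edge set is the union of two disjoint spanning trees. The contraction $G/G'$ replaces all vertices of $V'$ by one new vertex, deletes all edges with both ends in $V'$, and makes every other edge with an end in $V'$ incident to the new vertex; its edges are identified with the corresponding edges of $G$. *)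

theory Defs
  imports Main
begin

text \<open>Parallel edges are allowed (different edges may have the same ends).\<close>

definition mgraph :: "'v set \<Rightarrow> 'e set \<Rightarrow> ('e \<Rightarrow> 'v \<times> 'v) \<Rightarrow> bool" where
  "mgraph V E ends \<longleftrightarrow> finite V \<and> finite E \<and>
     (\<forall>e\<in>E. fst (ends e) \<in> V \<and> snd (ends e) \<in> V \<and> fst (ends e) \<noteq> snd (ends e))"

definition joins :: "('e \<Rightarrow> 'v \<times> 'v) \<Rightarrow> 'e \<Rightarrow> 'v \<Rightarrow> 'v \<Rightarrow> bool" where
  "joins ends e u v \<longleftrightarrow> ends e = (u, v) \<or> ends e = (v, u)"

inductive reach :: "('e \<Rightarrow> 'v \<times> 'v) \<Rightarrow> 'e set \<Rightarrow> 'v \<Rightarrow> 'v \<Rightarrow> bool"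
  for ends F where
  reach_refl: "reach ends F u u"
| reach_step: "reach ends F u v \<Longrightarrow> e \<in> F \<Longrightarrow> joins ends e v w \<Longrightarrow> reach ends F u w"

text \<open>A cycle in F: distinct vertices v_0..v_(k-1), distinct edges e_0..e_(k-1) of F,
  e_i joining v_i and v_(i+1 mod k). Two parallel edges form a cycle (k = 2).\<close>
definition has_cycle :: "('e \<Rightarrow> 'v \<times> 'v) \<Rightarrow> 'e set \<Rightarrow> bool" where
  "has_cycle ends F \<longleftrightarrow> (\<exists>vs es. length vs = length es \<and> length es \<ge> 1 \<and>
      distinct vs \<and> distinct es \<and> set es \<subseteq> F \<and>
      (\<forall>i < length es. joins ends (es ! i) (vs ! i) (vs ! ((i + 1) mod length es))))"

definition spanning_tree :: "'v set \<Rightarrow> 'e set \<Rightarrow> ('e \<Rightarrow> 'v \<times> 'v) \<Rightarrow> 'e set \<Rightarrow> bool" where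
  "spanning_tree V E ends T \<longleftrightarrow> T \<subseteq> E \<and> (\<forall>u\<in>V. \<forall>v\<in>V. reach ends T u v) \<and> \<not> has_cycle ends T"

definition bispanning :: "'v set \<Rightarrow> 'e set \<Rightarrow> ('e \<Rightarrow> 'v \<times> 'v) \<Rightarrow> bool" where
  "bispanning V E ends \<longleftrightarrow> (\<exists>S T. S \<inter> T = {} \<and> S \<union> T = E \<and>
      spanning_tree V E ends S \<and> spanning_tree V E ends T)"

definition subgraph :: "'v set \<Rightarrow> 'e set \<Rightarrow> 'v set \<Rightarrow> 'e set \<Rightarrow> ('e \<Rightarrow> 'v \<times> 'v) \<Rightarrow> bool" where
  "subgraph V' E' V E ends \<longleftrightarrow> V' \<subseteq> V \<and> E' \<subseteq> E \<and> mgraph V' E' ends"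

text \<open>Contraction G/G': vertices of V' are replaced by the new vertex None,
  other vertices v become Some v; edges with both ends in V' are deleted,
  the remaining edges keep their identity with ends redirected.\<close>
definition contr_map :: "'v set \<Rightarrow> 'v \<Rightarrow> 'v option" where
  "contr_map V' v = (if v \<in> V' then None else Some v)"

definition contr_V :: "'v set \<Rightarrow> 'v set \<Rightarrow> 'v option set" where
  "contr_V V V' = insert None (Some ` (V - V'))"

definition contr_E :: "'e set \<Rightarrow> 'v set \<Rightarrow> ('e \<Rightarrow> 'v \<times> 'v) \<Rightarrow> 'e set" where
  "contr_E E V' ends = {e \<in> E. \<not> (fst (ends e) \<in> V' \<and> snd (ends e) \<in> V')}"

definition contr_ends :: "'v set \<Rightarrow> ('e \<Rightarrow> 'v \<times> 'v) \<Rightarrow> 'e \<Rightarrow> 'v option \<times> 'v option" where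
  "contr_ends V' ends e = (contr_map V' (fst (ends e)), contr_map V' (snd (ends e)))"

end

theory Submission imports Defs begin

lemma joins_sym: "joins ends e u v \<Longrightarrow> joins ends e v u"
  by (auto simp: joins_def)

lemma reach_trans: "reach ends F v w \<Longrightarrow> reach ends F u v \<Longrightarrow> reach ends F u w"
  by (induction rule: reach.induct) (auto intro: reach.intros)

lemma reach_edge: "e \<in> F \<Longrightarrow> joins ends e u v \<Longrightarrow> reach ends F u v"
  by (meson reach.intros)

lemma reach_sym: "reach ends F u v \<Longrightarrow> reach ends F v u"
proof (induction rule: reach.induct)
  case (reach_refl u) then show ?case by (rule reach.intros)
next
  case (reach_step u v e w)
  have "reach ends F w v" using reach_step by (meson joins_sym reach_edge)
  then show ?case using reach_step reach_trans by metis
qed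

lemma reach_mono: "reach ends F u v \<Longrightarrow> F \<subseteq> G \<Longrightarrow> reach ends G u v"
  by (induction rule: reach.induct) (auto intro: reach.intros)

definition inW :: "('e \<Rightarrow> 'v \<times> 'v) \<Rightarrow> 'v set \<Rightarrow> 'e set \<Rightarrow> bool" where
  "inW ends W F \<longleftrightarrow> (\<forall>e\<in>F. fst (ends e) \<in> W \<and> snd (ends e) \<in> W)"

lemma joins_inW: "inW ends W F \<Longrightarrow> e \<in> F \<Longrightarrow> joins ends e u v \<Longrightarrow> u \<in> W \<and> v \<in> W"
  unfolding inW_def joins_def by (metis fst_conv snd_conv)

lemma reach_inW: "reach ends F u v \<Longrightarrow> inW ends W F \<Longrightarrow> u \<in> W \<Longrightarrow> v \<in> W"
  by (induction rule: reach.induct) (auto dest: joins_inW)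

definition path :: "('e \<Rightarrow> 'v \<times> 'v) \<Rightarrow> 'e set \<Rightarrow> 'v list \<Rightarrow> 'e list \<Rightarrow> bool" where
  "path ends F vs es \<longleftrightarrow> length vs = Suc (length es) \<and> set es \<subseteq> F \<and>
     (\<forall>i<length es. joins ends (es!i) (vs!i) (vs!Suc i))"

lemma reach_path: "reach ends F u v \<Longrightarrow>
   \<exists>vs es. path ends F vs es \<and> hd vs = u \<and> last vs = v \<and> distinct vs"
proof (induction rule: reach.induct)
  case (reach_refl u)
  show ?case by (rule exI[of _ "[u]"], rule exI[of _ "[]"]) (simp add: path_def)
next
  case (reach_step u v e w)
  then obtain vs es where p: "path ends F vs es" "hd vs = u" "last vs = v" "distinct vs" by blast
  have ne: "vs \<noteq> []" using p(1) by (auto simp: path_def)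
  show ?case
  proof (cases "w \<in> set vs")
    case True
    then obtain j where j: "j < length vs" "vs ! j = w" by (metis in_set_conv_nth)
    have "path ends F (take (Suc j) vs) (take j es)"
      using p(1) j unfolding path_def
      by (auto simp: min_def dest: in_set_takeD)
    moreover have "hd (take (Suc j) vs) = u" using p(2) ne by simp
    moreover have "last (take (Suc j) vs) = w" using j
      by (simp add: take_Suc_conv_app_nth)
    moreover have "distinct (take (Suc j) vs)" using p(4) by simp
    ultimately show ?thesis by blast
  next
    case False
    have "path ends F (vs @ [w]) (es @ [e])"
      using p(1) reach_step.hyps unfolding path_def
    proof (intro conjI allI impI)
      fix i assume "length vs = Suc (length es) \<and> set es \<subseteq> F \<and> (\<forall>i<length es. joins ends (es ! i) (vs ! i) (vs ! Suc i))"
        "i < length (es @ [e])"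
      then show "joins ends ((es @ [e]) ! i) ((vs @ [w]) ! i) ((vs @ [w]) ! Suc i)"
        using reach_step.hyps p(3) ne
        by (cases "i < length es") (auto simp: nth_append last_conv_nth less_Suc_eq)
    qed auto
    moreover have "hd (vs @ [w]) = u" using p(2) ne by simp
    moreover have "last (vs @ [w]) = w" by simp
    moreover have "distinct (vs @ [w])" using p(4) False by simp
    ultimately show ?thesis by blast
  qed
qed


lemma path_distinct_edges:
  assumes "path ends F vs es" "distinct vs" shows "distinct es"
proof -
  have L: "length vs = Suc (length es)" and J: "\<forall>i<length es. joins ends (es!i) (vs!i) (vs!Suc i)"
    using assms(1) by (auto simp: path_def)
  show ?thesis unfolding distinct_conv_nth
  proof (intro allI impI)
    fix i j assume ij: "i < length es" "j < length es" "i \<noteq> j"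
    show "es ! i \<noteq> es ! j"
    proof
      assume eq: "es ! i = es ! j"
      have "joins ends (es!i) (vs!i) (vs!Suc i)" "joins ends (es!i) (vs!j) (vs!Suc j)"
        using J ij eq by auto
      then have "(vs!i = vs!j \<and> vs!Suc i = vs!Suc j) \<or> (vs!i = vs!Suc j \<and> vs!Suc i = vs!j)"
        by (auto simp: joins_def)
      moreover have inj: "\<And>a b. a < length vs \<Longrightarrow> b < length vs \<Longrightarrow> vs!a = vs!b \<Longrightarrow> a = b"
        using assms(2) by (simp add: nth_eq_iff_index_eq)
      moreover have lens: "i < length vs" "j < length vs" "Suc i < length vs" "Suc j < length vs"
        using ij L by auto
      ultimately show False
      proof (elim disjE conjE)
        assume "vs!i = vs!j" then have "i = j" using inj lens by blast
        with ij show False by simp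
      next
        assume "vs!i = vs!Suc j" "vs!Suc i = vs!j"
        then have "i = Suc j" "Suc i = j" using inj lens by blast+
        then show False by simp
      qed
    qed
  qed
qed

lemma reach_cycle:
  assumes "reach ends F b a" "joins ends e a b" "e \<notin> F"
  shows "has_cycle ends (insert e F)"
proof -
  obtain vs es where p: "path ends F vs es" "hd vs = b" "last vs = a" "distinct vs"
    using reach_path[OF assms(1)] by blast
  have L: "length vs = Suc (length es)" and S: "set es \<subseteq> F"
    and J: "\<forall>i<length es. joins ends (es!i) (vs!i) (vs!Suc i)"
    using p(1) by (auto simp: path_def)
  have de: "distinct es" using path_distinct_edges p by blast
  have ne: "vs \<noteq> []" using L by auto
  show ?thesis unfolding has_cycle_def
  proof (rule exI[of _ vs], rule exI[of _ "es @ [e]"], intro conjI allI impI)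
    show "distinct (es @ [e])" using de S assms(3) by auto
    show "set (es @ [e]) \<subseteq> insert e F" using S by auto
    fix i assume i: "i < length (es @ [e])"
    show "joins ends ((es @ [e]) ! i) (vs ! i) (vs ! ((i + 1) mod length (es @ [e])))"
    proof (cases "i < length es")
      case True then show ?thesis using J by (simp add: nth_append)
    next
      case False
      then have "i = length es" using i by simp
      then show ?thesis using assms(2) p(2,3) L ne
        by (simp add: nth_append last_conv_nth hd_conv_nth joins_sym)
    qed
  qed (use L p in auto)
qed

lemma cycle_edge:
  assumes "has_cycle ends F"
  shows "\<exists>e\<in>F. \<exists>a b. joins ends e a b \<and> reach ends (F - {e}) a b"
proof -
  obtain vs es where c: "length vs = length es" "length es \<ge> 1" "distinct vs" "distinct es"
    "set es \<subseteq> F" "\<forall>i < length es. joins ends (es ! i) (vs ! i) (vs ! ((i + 1) mod length es))"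
    using assms unfolding has_cycle_def by blast
  define n where "n = length es"
  have e0: "es!0 \<in> F" 
  proof -
    have "0 < length es" using c(2) by (simp add: Suc_le_eq)
    then show ?thesis using c(5) nth_mem by blast
  qed
  have pos: "0 < length es" using c(2) by (simp add: Suc_le_eq)
  have j00: "joins ends (es!0) (vs!0) (vs!((0+1) mod length es))" by (rule c(6)[rule_format, OF pos])
  have j0: "joins ends (es!0) (vs!0) (vs!(1 mod n))" using j00 unfolding n_def by simp
  show ?thesis
  proof (cases "n = 1")
    case True
    then show ?thesis using e0 j0 by (auto intro: reach.intros)
  next
    case False
    then have n2: "n \<ge> 2" using c n_def by auto
    have R: "reach ends (F - {es!0}) (vs!1) (vs!(j mod n))" if "1 \<le> j" "j \<le> n" for j
      using that
    proof (induction j rule: dec_induct)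
      case base then show ?case using n2 by (simp add: reach.intros)
    next
      case (step j)
      have jn: "j < n" using step by simp
      have "joins ends (es!j) (vs!j) (vs!((j+1) mod n))" using c(6) jn n_def by auto
      moreover have "es!j \<in> F - {es!0}"
      proof -
        have "es!j \<noteq> es!0" using c(4) jn n_def step.hyps pos by (simp add: nth_eq_iff_index_eq)
        moreover have "es!j \<in> F" using c(5) jn n_def nth_mem by blast
        ultimately show ?thesis by simp
      qed
      ultimately show ?case using step jn by (auto intro: reach.intros)
    qed
    have "reach ends (F - {es!0}) (vs!0) (vs!1)"
      using R[of n] n2 by (auto intro: reach_sym)
    then show ?thesis using e0 j0 n2 by auto
  qed
qed


definition rel :: "('e \<Rightarrow> 'v \<times> 'v) \<Rightarrow> 'v set \<Rightarrow> 'e set \<Rightarrow> ('v \<times> 'v) set" where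
  "rel ends W F = {(u,v). u \<in> W \<and> v \<in> W \<and> reach ends F u v}"

definition ncomp :: "('e \<Rightarrow> 'v \<times> 'v) \<Rightarrow> 'v set \<Rightarrow> 'e set \<Rightarrow> nat" where
  "ncomp ends W F = card (W // rel ends W F)"

lemma quotient_image: "W // R = (\<lambda>u. R``{u}) ` W"
  by (auto simp: quotient_def)

lemma equiv_rel: "equiv W (rel ends W F)"
  unfolding rel_def
  by (rule equivI) (auto simp: refl_on_def sym_def trans_def intro: reach.intros reach_sym reach_trans)

lemma rel_class: "rel ends W F `` {u} = (if u \<in> W then {v \<in> W. reach ends F u v} else {})"
  by (auto simp: rel_def)

lemma reach_insert_iff:
  assumes "joins ends e a b"
  shows "reach ends (insert e F) u v \<longleftrightarrow>
     reach ends F u v \<or> (reach ends F u a \<and> reach ends F b v) \<or> (reach ends F u b \<and> reach ends F a v)"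
proof
  assume "reach ends (insert e F) u v"
  then show "reach ends F u v \<or> (reach ends F u a \<and> reach ends F b v) \<or> (reach ends F u b \<and> reach ends F a v)"
  proof (induction rule: reach.induct)
    case (reach_refl u) then show ?case by (simp add: reach.intros)
  next
    case (reach_step u v g w)
    show ?case
    proof (cases "g \<in> F")
      case True
      then have "reach ends F v w" by (rule reach_edge) (use reach_step in auto)
      then show ?thesis using reach_step.IH by (meson reach_trans)
    next
      case False
      then have "g = e" using reach_step by auto
      then have "(v = a \<and> w = b) \<or> (v = b \<and> w = a)"
        using reach_step.hyps(3) assms by (auto simp: joins_def)
      then show ?thesis using reach_step.IH
        by (metis reach.intros(1) reach_sym reach_trans)
    qed
  qed
next
  have e: "reach ends (insert e F) a b" "reach ends (insert e F) b a"
    using assms by (auto intro: reach_edge joins_sym)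
  assume "reach ends F u v \<or> (reach ends F u a \<and> reach ends F b v) \<or> (reach ends F u b \<and> reach ends F a v)"
  moreover have "\<And>x y. reach ends F x y \<Longrightarrow> reach ends (insert e F) x y"
    by (erule reach_mono) auto
  ultimately show "reach ends (insert e F) u v" using e by (meson reach_trans)
qed

lemma merge_same:
  assumes "joins ends e a b" "reach ends F a b"
  shows "rel ends W (insert e F) = rel ends W F"
proof -
  have "reach ends (insert e F) u v \<longleftrightarrow> reach ends F u v" for u v
    using reach_insert_iff[OF assms(1)] assms(2) by (metis reach_sym reach_trans)
  then show ?thesis unfolding rel_def by simp
qed

lemma merge_diff:
  assumes j: "joins ends e a b" and nr: "\<not> reach ends F a b" and ab: "a \<in> W" "b \<in> W"
    and fin: "finite W"
  shows "ncomp ends W F = Suc (ncomp ends W (insert e F))"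
proof -
  define R where "R = rel ends W F"
  define R' where "R' = rel ends W (insert e F)"
  define A where "A = R``{a}"
  define B where "B = R``{b}"
  have eq: "equiv W R" unfolding R_def by (rule equiv_rel)
  have A: "A = {v\<in>W. reach ends F a v}" using ab by (simp add: A_def R_def rel_class)
  have B: "B = {v\<in>W. reach ends F b v}" using ab by (simp add: B_def R_def rel_class)
  have cl: "R'``{u} = (if u \<in> A \<union> B then A \<union> B else R``{u})" if u: "u \<in> W" for u
  proof -
    have "R'``{u} = {v\<in>W. reach ends (insert e F) u v}" using u by (simp add: R'_def rel_class)
    also have "\<dots> = {v\<in>W. reach ends F u v \<or> (reach ends F u a \<and> reach ends F b v) \<or> (reach ends F u b \<and> reach ends F a v)}"
      using reach_insert_iff[OF j] by blast
    finally have 1: "R'``{u} = {v\<in>W. reach ends F u v \<or> (reach ends F u a \<and> reach ends F b v) \<or> (reach ends F u b \<and> reach ends F a v)}" .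
    have 2: "R``{u} = {v\<in>W. reach ends F u v}" using u by (simp add: R_def rel_class)
    show ?thesis
    proof (cases "u \<in> A \<union> B")
      case True
      then have ua: "reach ends F u a \<or> reach ends F u b" using A B by (auto intro: reach_sym)
      have "reach ends F u v \<or> (reach ends F u a \<and> reach ends F b v) \<or> (reach ends F u b \<and> reach ends F a v)
         \<longleftrightarrow> reach ends F a v \<or> reach ends F b v" for v
      proof (cases "reach ends F u a")
        case True then show ?thesis by (metis reach_sym reach_trans)
      next
        case False then have "reach ends F u b" using ua by simp
        then show ?thesis by (metis reach_sym reach_trans)
      qed
      then show ?thesis using True 1 unfolding A B by auto
    next
      case False
      then have "\<not> reach ends F u a" "\<not> reach ends F u b" using A B u by (auto intro: reach_sym)
      then show ?thesis using False 1 2 by auto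
    qed
  qed
  have Q: "W // R = (\<lambda>u. R``{u}) ` W" "W // R' = (\<lambda>u. R'``{u}) ` W" by (rule quotient_image)+
  have AQ: "A \<in> W // R" "B \<in> W // R" using ab Q(1) A_def B_def by auto
  have AB: "A \<noteq> B" using A B ab nr by (auto intro: reach.intros)
  have cls: "R``{u} = A" if "u \<in> A" for u
    using that eq unfolding A_def by (metis Image_singleton_iff equiv_class_eq)
  have clsB: "R``{u} = B" if "u \<in> B" for u
    using that eq unfolding B_def by (metis Image_singleton_iff equiv_class_eq)
  have self: "u \<in> R``{u}" if "u \<in> W" for u using eq that by (rule equiv_class_self)
  have Q': "W // R' = insert (A \<union> B) (W // R - {A, B})"
  proof
    show "W // R' \<subseteq> insert (A \<union> B) (W // R - {A, B})"
    proof
      fix C assume "C \<in> W // R'"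
      then obtain u where u: "u \<in> W" "C = R'``{u}" using Q(2) by auto
      show "C \<in> insert (A \<union> B) (W // R - {A, B})"
      proof (cases "u \<in> A \<union> B")
        case True then show ?thesis using cl u by simp
      next
        case False
        then have "R``{u} \<noteq> A" "R``{u} \<noteq> B" using self u by auto
        then show ?thesis using cl u False Q(1) by auto
      qed
    qed
  next
    show "insert (A \<union> B) (W // R - {A, B}) \<subseteq> W // R'"
    proof
      fix C assume C: "C \<in> insert (A \<union> B) (W // R - {A, B})"
      show "C \<in> W // R'"
      proof (cases "C = A \<union> B")
        case True
        have "a \<in> A" using A ab by (auto intro: reach.intros)
        then have "C = R'``{a}" using True cl[OF ab(1)] by simp
        then show ?thesis using ab(1) by (simp add: quotientI)
      next
        case False
        then obtain u where u: "u \<in> W" "C = R``{u}" "C \<noteq> A" "C \<noteq> B" using C Q(1) by auto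
        then have "u \<notin> A \<union> B" using cls clsB by auto
        then have "C = R'``{u}" using cl u by simp
        then show ?thesis using u(1) by (simp add: quotientI)
      qed
    qed
  qed
  have notin: "A \<union> B \<notin> W // R - {A, B}"
  proof
    assume "A \<union> B \<in> W // R - {A, B}"
    then obtain u where u: "u \<in> W" "A \<union> B = R``{u}" using Q(1) by auto
    have "a \<in> A" using A ab by (auto intro: reach.intros)
    then have "a \<in> R``{u}" using u by auto
    then have "R``{u} = R``{a}" using eq by (metis Image_singleton_iff equiv_class_eq)
    then have "A \<union> B = A" using u A_def by simp
    moreover have "b \<in> B" using B ab by (auto intro: reach.intros)
    ultimately have "b \<in> A" by auto
    then show False using A nr by auto
  qed
  have finQ: "finite (W // R)" using fin eq by (metis equiv_type finite_quotient)
  have "card (W // R') = Suc (card (W // R - {A, B}))"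
    using Q' notin finQ by simp
  also have "card (W // R - {A, B}) = card (W // R) - 2"
    using AQ AB finQ by (simp add: card_Diff_subset)
  finally have "card (W // R') = Suc (card (W // R) - 2)" .
  moreover have "card (W // R) \<ge> 2"
  proof -
    have "card {A, B} \<le> card (W // R)" using AQ finQ by (intro card_mono) auto
    then show ?thesis using AB by simp
  qed
  ultimately show ?thesis unfolding ncomp_def R_def R'_def by simp
qed


lemma reach_empty: "reach ends {} u v \<Longrightarrow> u = v"
  by (induction rule: reach.induct) auto

lemma has_cycle_mono: "has_cycle ends F \<Longrightarrow> F \<subseteq> G \<Longrightarrow> has_cycle ends G"
  unfolding has_cycle_def by blast

lemma inW_subset: "inW ends W F \<Longrightarrow> G \<subseteq> F \<Longrightarrow> inW ends W G"
  unfolding inW_def by blast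

lemma ncomp_empty: "ncomp ends W {} = card W"
proof -
  have "W // rel ends W {} = (\<lambda>u. {u}) ` W"
    unfolding quotient_image by (rule image_cong) (auto simp: rel_class dest: reach_empty intro: reach.intros)
  then show ?thesis unfolding ncomp_def by (simp add: card_image)
qed

lemma inW_joins: "inW ends W F \<Longrightarrow> e \<in> F \<Longrightarrow> \<exists>a b. joins ends e a b \<and> a \<in> W \<and> b \<in> W"
  unfolding inW_def joins_def by (metis prod.collapse)

lemma count_ge:
  assumes "finite F" "finite W" "inW ends W F"
  shows "card F + ncomp ends W F \<ge> card W"
  using assms
proof (induction F rule: finite_induct)
  case empty then show ?case by (simp add: ncomp_empty)
next
  case (insert e F)
  obtain a b where ab: "joins ends e a b" "a \<in> W" "b \<in> W" using inW_joins[OF insert.prems(2) insertI1] by blast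
  have iF: "inW ends W F" by (rule inW_subset[OF insert.prems(2)]) auto
  have IH: "card F + ncomp ends W F \<ge> card W" by (rule insert.IH[OF insert.prems(1) iF])
  show ?case
  proof (cases "reach ends F a b")
    case True
    then show ?thesis using merge_same[OF ab(1) True, of W] IH insert.hyps unfolding ncomp_def by simp
  next
    case False
    then show ?thesis using merge_diff[OF ab(1) False ab(2,3) insert.prems(1)] IH insert.hyps by simp
  qed
qed

lemma count_acyclic:
  assumes "finite F" "finite W" "inW ends W F" "\<not> has_cycle ends F"
  shows "card F + ncomp ends W F = card W"
  using assms
proof (induction F rule: finite_induct)
  case empty then show ?case by (simp add: ncomp_empty)
next
  case (insert e F)
  obtain a b where ab: "joins ends e a b" "a \<in> W" "b \<in> W" using inW_joins[OF insert.prems(2) insertI1] by blast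
  have iF: "inW ends W F" by (rule inW_subset[OF insert.prems(2)]) auto
  have aF: "\<not> has_cycle ends F" using insert.prems(3) has_cycle_mono[of ends F "insert e F"] by auto
  have IH: "card F + ncomp ends W F = card W" by (rule insert.IH[OF insert.prems(1) iF aF])
  have nr: "\<not> reach ends F a b"
  proof
    assume "reach ends F a b"
    then have "has_cycle ends (insert e F)" by (rule reach_cycle[OF reach_sym ab(1) insert.hyps(2)])
    then show False using insert.prems by blast
  qed
  show ?case using merge_diff[OF ab(1) nr ab(2,3) insert.prems(1)] IH insert.hyps by simp
qed

lemma count_cycle:
  assumes "finite F" "finite W" "inW ends W F" "has_cycle ends F"
  shows "card F + ncomp ends W F > card W"
proof -
  obtain e a b where e: "e \<in> F" "joins ends e a b" "reach ends (F - {e}) a b"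
    using cycle_edge[OF assms(4)] by blast
  have "card (F - {e}) + ncomp ends W (F - {e}) \<ge> card W"
    using count_ge[of "F - {e}" W ends] assms(1,2) inW_subset[OF assms(3), of "F - {e}"] by auto
  moreover have "ncomp ends W F = ncomp ends W (F - {e})"
    using merge_same[OF e(2,3), of W] e(1) unfolding ncomp_def by (simp add: insert_absorb)
  moreover have "card F = Suc (card (F - {e}))" using card_Suc_Diff1[OF assms(1) e(1)] by simp
  ultimately show ?thesis by simp
qed

lemma ncomp_one_iff:
  assumes "finite W" "W \<noteq> {}"
  shows "ncomp ends W F = 1 \<longleftrightarrow> (\<forall>u\<in>W. \<forall>v\<in>W. reach ends F u v)"
proof
  assume c: "ncomp ends W F = 1"
  then obtain C where C: "W // rel ends W F = {C}" unfolding ncomp_def by (auto simp: card_Suc_eq)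
  show "\<forall>u\<in>W. \<forall>v\<in>W. reach ends F u v"
  proof (intro ballI)
    fix u v assume uv: "u \<in> W" "v \<in> W"
    have "rel ends W F `` {u} = C" "rel ends W F `` {v} = C"
      using C quotientI[OF uv(1), of "rel ends W F"] quotientI[OF uv(2), of "rel ends W F"] by auto
    then have "(u, v) \<in> rel ends W F" using eq_equiv_class_iff[OF equiv_rel[of W ends F] uv] by simp
    then show "reach ends F u v" by (simp add: rel_def)
  qed
next
  assume a: "\<forall>u\<in>W. \<forall>v\<in>W. reach ends F u v"
  have "W // rel ends W F = (\<lambda>u. W) ` W"
    unfolding quotient_image by (rule image_cong) (use a in \<open>auto simp: rel_class\<close>)
  moreover have "(\<lambda>u. W) ` W = {W}" using assms(2) by auto
  ultimately show "ncomp ends W F = 1" unfolding ncomp_def by simp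
qed

lemma ncomp_pos:
  assumes "finite W" "W \<noteq> {}" shows "ncomp ends W F \<ge> 1"
proof -
  have "finite (W // rel ends W F)" using assms equiv_rel by (metis equiv_type finite_quotient)
  moreover have "W // rel ends W F \<noteq> {}" using assms by simp
  ultimately show ?thesis unfolding ncomp_def by (simp add: Suc_le_eq card_gt_0_iff)
qed

lemma acyclic_card:
  assumes "finite F" "finite W" "inW ends W F" "\<not> has_cycle ends F" "W \<noteq> {}"
  shows "card F + 1 \<le> card W"
  using count_acyclic[OF assms(1-4)] ncomp_pos[OF assms(2,5), where ends=ends and F=F] by simp

lemma tree_card:
  assumes "finite F" "finite W" "inW ends W F" "\<not> has_cycle ends F" "W \<noteq> {}"
    "\<forall>u\<in>W. \<forall>v\<in>W. reach ends F u v"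
  shows "card F + 1 = card W"
  using count_acyclic[OF assms(1-4)] ncomp_one_iff[OF assms(2,5), where ends=ends and F=F] assms(6) by simp

lemma acyclic_connected:
  assumes "finite F" "finite W" "inW ends W F" "\<not> has_cycle ends F" "W \<noteq> {}"
    "card F + 1 = card W"
  shows "\<forall>u\<in>W. \<forall>v\<in>W. reach ends F u v"
  using count_acyclic[OF assms(1-4)] ncomp_one_iff[OF assms(2,5), where ends=ends and F=F] assms(6) by simp

lemma connected_acyclic:
  assumes "finite F" "finite W" "inW ends W F" "W \<noteq> {}"
    "\<forall>u\<in>W. \<forall>v\<in>W. reach ends F u v" "card F + 1 \<le> card W"
  shows "\<not> has_cycle ends F"
proof
  assume c: "has_cycle ends F"
  have "card W < card F + ncomp ends W F" by (rule count_cycle[OF assms(1-3) c])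
  moreover have "ncomp ends W F = 1" using ncomp_one_iff[OF assms(2,4), where ends=ends and F=F] assms(5) by simp
  ultimately show False using assms(6) by simp
qed


lemma contr_reach:
  assumes "reach ends F u v" "F \<subseteq> E"
  shows "reach (contr_ends V' ends) (F \<inter> contr_E E V' ends) (contr_map V' u) (contr_map V' v)"
  using assms
proof (induction rule: reach.induct)
  case (reach_refl u) show ?case by (rule reach.intros)
next
  case (reach_step u v g w)
  then have IH: "reach (contr_ends V' ends) (F \<inter> contr_E E V' ends) (contr_map V' u) (contr_map V' v)"
    by blast
  show ?case
  proof (cases "g \<in> contr_E E V' ends")
    case True
    have "joins (contr_ends V' ends) g (contr_map V' v) (contr_map V' w)"
      using reach_step.hyps(3) by (auto simp: joins_def contr_ends_def)
    then show ?thesis using IH True reach_step.hyps(2) by (meson IntI reach.reach_step)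
  next
    case False
    then have "fst (ends g) \<in> V'" "snd (ends g) \<in> V'"
      using reach_step.hyps(2) reach_step.prems by (auto simp: contr_E_def)
    then have "contr_map V' v = contr_map V' w"
      using reach_step.hyps(3) by (auto simp: joins_def contr_map_def)
    then show ?thesis using IH by simp
  qed
qed

lemma contr_inW:
  assumes "mgraph V E ends"
  shows "inW (contr_ends V' ends) (contr_V V V') (contr_E E V' ends)"
  using assms unfolding inW_def mgraph_def contr_E_def contr_ends_def contr_V_def contr_map_def
  by auto

lemma contr_card:
  assumes "finite V" "V' \<subseteq> V"
  shows "card (contr_V V V') = Suc (card V - card V')"
proof -
  have "card (Some ` (V - V')) = card V - card V'"
    using assms by (simp add: card_image card_Diff_subset finite_subset)
  then show ?thesis unfolding contr_V_def using assms by simp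
qed

lemma contr_map_eq_reach:
  assumes "contr_map V' a = contr_map V' b" "\<forall>u\<in>V'. \<forall>v\<in>V'. reach ends S' u v"
  shows "reach ends (S' \<union> Sb) a b"
proof (cases "a \<in> V'")
  case True
  then have "b \<in> V'" using assms(1) by (auto simp: contr_map_def split: if_splits)
  then show ?thesis using True assms(2) reach_mono by (metis sup_ge1)
next
  case False
  then have "a = b" using assms(1) by (auto simp: contr_map_def split: if_splits)
  then show ?thesis by (simp add: reach.intros)
qed

lemma contr_lift:
  assumes "reach (contr_ends V' ends) Sb x y" "Sb \<subseteq> contr_E E V' ends"
    "\<forall>u\<in>V'. \<forall>v\<in>V'. reach ends S' u v"
  shows "\<forall>u v. contr_map V' u = x \<longrightarrow> contr_map V' v = y \<longrightarrow> reach ends (S' \<union> Sb) u v"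
  using assms
proof (induction rule: reach.induct)
  case (reach_refl x)
  show ?case
  proof (intro allI impI)
    fix u v assume "contr_map V' u = x" "contr_map V' v = x"
    then have "contr_map V' u = contr_map V' v" by simp
    then show "reach ends (S' \<union> Sb) u v" by (rule contr_map_eq_reach[OF _ reach_refl.prems(2)])
  qed
next
  case (reach_step x y g z)
  have IH: "\<forall>u v. contr_map V' u = x \<longrightarrow> contr_map V' v = y \<longrightarrow> reach ends (S' \<union> Sb) u v"
    using reach_step by blast
  obtain p q where pq: "ends g = (p, q)" by fastforce
  have gS: "g \<in> S' \<union> Sb" using reach_step.hyps(2) by simp
  have jpq: "joins ends g p q" "joins ends g q p" using pq by (auto simp: joins_def)
  have "(contr_map V' p = y \<and> contr_map V' q = z) \<or> (contr_map V' q = y \<and> contr_map V' p = z)"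
    using reach_step.hyps(3) pq by (auto simp: joins_def contr_ends_def)
  then show ?case
  proof
    assume c: "contr_map V' p = y \<and> contr_map V' q = z"
    show ?thesis
    proof (intro allI impI)
      fix u v assume uv: "contr_map V' u = x" "contr_map V' v = z"
      have "reach ends (S' \<union> Sb) u p" using IH uv c by blast
      then have "reach ends (S' \<union> Sb) u q" using gS jpq by (meson reach.reach_step)
      moreover have "reach ends (S' \<union> Sb) q v" using contr_map_eq_reach[of V' q v ends S' Sb] c uv reach_step.prems by simp
      ultimately show "reach ends (S' \<union> Sb) u v" by (meson reach_trans)
    qed
  next
    assume c: "contr_map V' q = y \<and> contr_map V' p = z"
    show ?thesis
    proof (intro allI impI)
      fix u v assume uv: "contr_map V' u = x" "contr_map V' v = z"
      have "reach ends (S' \<union> Sb) u q" using IH uv c by blast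
      then have "reach ends (S' \<union> Sb) u p" using gS jpq by (meson reach.reach_step)
      moreover have "reach ends (S' \<union> Sb) p v" using contr_map_eq_reach[of V' p v ends S' Sb] c uv reach_step.prems by simp
      ultimately show "reach ends (S' \<union> Sb) u v" by (meson reach_trans)
    qed
  qed
qed


lemma st_card:
  assumes "spanning_tree W Ed ends T" "finite Ed" "finite W" "inW ends W Ed" "W \<noteq> {}"
  shows "card T + 1 = card W"
proof -
  have "T \<subseteq> Ed" using assms(1) by (simp add: spanning_tree_def)
  moreover have "finite T" using \<open>T \<subseteq> Ed\<close> assms(2) finite_subset by blast
  moreover have "inW ends W T" using inW_subset[OF assms(4) \<open>T \<subseteq> Ed\<close>] .
  ultimately show ?thesis using tree_card[of T W ends] assms(1,3,5)
    unfolding spanning_tree_def by blast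
qed

lemma mgraph_inW: "mgraph V E ends \<Longrightarrow> inW ends V E"
  by (simp add: mgraph_def inW_def)

lemma contr_V_pre:
  assumes "x \<in> contr_V V V'" "V' \<noteq> {}" "V' \<subseteq> V" shows "\<exists>u\<in>V. contr_map V' u = x"
proof (cases x)
  case None
  obtain w where "w \<in> V'" using assms(2) by blast
  then show ?thesis using None assms(3) unfolding contr_map_def by auto
next
  case (Some u)
  then have "u \<in> V - V'" using assms(1) unfolding contr_V_def by auto
  then show ?thesis using Some unfolding contr_map_def by auto
qed

lemma contr_map_in: "u \<in> V \<Longrightarrow> contr_map V' u \<in> contr_V V V'"
  unfolding contr_V_def contr_map_def by auto

theorem mainTheorem18:
  fixes V V' :: "'v set" and E E' :: "'e set" and ends :: "'e \<Rightarrow> 'v \<times> 'v"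
  assumes G: "mgraph V E ends" and bisp: "bispanning V E ends"
    and sub: "subgraph V' E' V E ends" and nonempty: "V' \<noteq> {}"
    and bisp': "bispanning V' E' ends"
  shows
   "(\<forall>S T. S \<inter> T = {} \<and> S \<union> T = E \<and> spanning_tree V E ends S \<and> spanning_tree V E ends T \<longrightarrow>
       spanning_tree V' E' ends (S \<inter> E') \<and> spanning_tree V' E' ends (T \<inter> E') \<and>
       (S \<inter> E') \<inter> (T \<inter> E') = {} \<and>
       spanning_tree (contr_V V V') (contr_E E V' ends) (contr_ends V' ends) (S \<inter> contr_E E V' ends) \<and>
       spanning_tree (contr_V V V') (contr_E E V' ends) (contr_ends V' ends) (T \<inter> contr_E E V' ends) \<and>
       (S \<inter> contr_E E V' ends) \<inter> (T \<inter> contr_E E V' ends) = {})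
    \<and>
    (\<forall>S' T' Sb Tb. S' \<inter> T' = {} \<and> spanning_tree V' E' ends S' \<and> spanning_tree V' E' ends T' \<and>
       Sb \<inter> Tb = {} \<and>
       spanning_tree (contr_V V V') (contr_E E V' ends) (contr_ends V' ends) Sb \<and>
       spanning_tree (contr_V V V') (contr_E E V' ends) (contr_ends V' ends) Tb \<longrightarrow>
       S' \<inter> Sb = {} \<and> T' \<inter> Tb = {} \<and>
       spanning_tree V E ends (S' \<union> Sb) \<and> spanning_tree V E ends (T' \<union> Tb) \<and>
       (S' \<union> Sb) \<inter> (T' \<union> Tb) = {})"
proof -
  define Vb where "Vb = contr_V V V'"
  define Eb where "Eb = contr_E E V' ends"
  define eb where "eb = contr_ends V' ends"
  have finV: "finite V" and finE: "finite E" and inWE: "inW ends V E"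
    using G mgraph_inW by (auto simp: mgraph_def)
  have VV: "V' \<subseteq> V" and EE: "E' \<subseteq> E" and G': "mgraph V' E' ends"
    using sub by (auto simp: subgraph_def)
  have finV': "finite V'" and finE': "finite E'" and inWE': "inW ends V' E'"
    using G' mgraph_inW by (auto simp: mgraph_def)
  have finVb: "finite Vb" unfolding Vb_def contr_V_def using finV by simp
  have EbE: "Eb \<subseteq> E" unfolding Eb_def contr_E_def by auto
  have finEb: "finite Eb" using EbE finE finite_subset by blast
  have inWb: "inW eb Vb Eb" unfolding eb_def Vb_def Eb_def by (rule contr_inW[OF G])
  have cardVb: "card Vb = Suc (card V - card V')" unfolding Vb_def by (rule contr_card[OF finV VV])
  have cardVV: "card V' \<le> card V" using VV finV card_mono by blast
  have Vne: "V \<noteq> {}" using VV nonempty by blast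
  have Vbne: "Vb \<noteq> {}" unfolding Vb_def contr_V_def by simp
  have E'Eb: "E' \<inter> Eb = {}" using G' unfolding Eb_def contr_E_def mgraph_def by auto
  obtain S0 T0 where ST0: "S0 \<inter> T0 = {}" "S0 \<union> T0 = E'" "spanning_tree V' E' ends S0" "spanning_tree V' E' ends T0"
    using bisp' unfolding bispanning_def by blast
  have "card S0 + 1 = card V'" "card T0 + 1 = card V'"
    using st_card[OF ST0(3) finE' finV' inWE' nonempty] st_card[OF ST0(4) finE' finV' inWE' nonempty] by auto
  moreover have "card E' = card S0 + card T0"
    using ST0(1,2) finE' card_Un_disjoint[of S0 T0] by auto
  ultimately have cardE': "card E' + 2 = 2 * card V'" by simp
  have part1: "spanning_tree V' E' ends (S \<inter> E') \<and> spanning_tree Vb Eb eb (S \<inter> Eb)"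
    if ST: "S \<inter> T = {}" "S \<union> T = E" "spanning_tree V E ends S" "spanning_tree V E ends T" for S T
  proof -
    have SE: "S \<subseteq> E" "T \<subseteq> E" using ST by (auto simp: spanning_tree_def)
    have acS: "\<not> has_cycle ends S" "\<not> has_cycle ends T" using ST by (auto simp: spanning_tree_def)
    have cS: "card S + 1 = card V" using st_card[OF ST(3) finE finV inWE Vne] .
    have finS: "finite S" "finite T" using SE finE finite_subset by blast+
    have acS': "\<not> has_cycle ends (S \<inter> E')" "\<not> has_cycle ends (T \<inter> E')"
      using acS has_cycle_mono[of ends "S \<inter> E'" S] has_cycle_mono[of ends "T \<inter> E'" T] by auto
    have inWST: "inW ends V' (S \<inter> E')" "inW ends V' (T \<inter> E')"
      using inWE' inW_subset[of ends V' E'] by auto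
    have le: "card (S \<inter> E') + 1 \<le> card V'" "card (T \<inter> E') + 1 \<le> card V'"
      using acyclic_card[OF _ finV' inWST(1) acS'(1) nonempty] acyclic_card[OF _ finV' inWST(2) acS'(2) nonempty]
        finE' by auto
    have "(S \<inter> E') \<union> (T \<inter> E') = E'" using ST(2) EE by blast
    moreover have "(S \<inter> E') \<inter> (T \<inter> E') = {}" using ST(1) by blast
    ultimately have "card E' = card (S \<inter> E') + card (T \<inter> E')"
      using finE' card_Un_disjoint[of "S \<inter> E'" "T \<inter> E'"] by auto
    then have eqS': "card (S \<inter> E') + 1 = card V'" using le cardE' by simp
    have inWS': "inW ends V' (S \<inter> E')" by (rule inWST(1))
    have conS': "\<forall>u\<in>V'. \<forall>v\<in>V'. reach ends (S \<inter> E') u v"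
      using acyclic_connected[OF _ finV' inWS' acS'(1) nonempty eqS'] finE' by blast
    have st1: "spanning_tree V' E' ends (S \<inter> E')"
      using conS' acS' by (simp add: spanning_tree_def)
    have conb: "\<forall>x\<in>Vb. \<forall>y\<in>Vb. reach eb (S \<inter> Eb) x y"
    proof (intro ballI)
      fix x y assume xy: "x \<in> Vb" "y \<in> Vb"
      obtain u where u: "u \<in> V" "contr_map V' u = x"
        using contr_V_pre[of x V V'] xy nonempty VV unfolding Vb_def by blast
      obtain v where v: "v \<in> V" "contr_map V' v = y"
        using contr_V_pre[of y V V'] xy nonempty VV unfolding Vb_def by blast
      note uv = u(1) v(1) u(2) v(2)
      have r: "reach ends S u v" using ST(3) uv by (simp add: spanning_tree_def)
      show "reach eb (S \<inter> Eb) x y"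
        using contr_reach[OF r SE(1), where V'=V'] uv unfolding eb_def Eb_def by simp
    qed
    have "card S = card (S \<inter> Eb) + card (S - Eb)"
    proof -
      have "S = (S \<inter> Eb) \<union> (S - Eb)" by blast
      then have "card S = card ((S \<inter> Eb) \<union> (S - Eb))" by simp
      also have "\<dots> = card (S \<inter> Eb) + card (S - Eb)"
        using finS(1) by (intro card_Un_disjoint) auto
      finally show ?thesis .
    qed
    moreover have "card (S \<inter> E') \<le> card (S - Eb)"
      using E'Eb finS(1) by (intro card_mono) auto
    ultimately have "card (S \<inter> Eb) + 1 \<le> card Vb" using cS eqS' cardVb cardVV by simp
    moreover have "inW eb Vb (S \<inter> Eb)" using inWb inW_subset[of eb Vb Eb] by auto
    ultimately have "\<not> has_cycle eb (S \<inter> Eb)"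
      using connected_acyclic[OF _ finVb _ Vbne conb] finEb by auto
    then have "spanning_tree Vb Eb eb (S \<inter> Eb)" using conb by (simp add: spanning_tree_def)
    then show ?thesis using st1 by simp
  qed
  have part2: "S' \<inter> Sb = {} \<and> spanning_tree V E ends (S' \<union> Sb)"
    if ST: "spanning_tree V' E' ends S'" "spanning_tree Vb Eb eb Sb" for S' Sb
  proof -
    have sub1: "S' \<subseteq> E'" "Sb \<subseteq> Eb" using ST by (auto simp: spanning_tree_def)
    have dis: "S' \<inter> Sb = {}" using sub1 E'Eb by blast
    have c1: "card S' + 1 = card V'" using st_card[OF ST(1) finE' finV' inWE' nonempty] .
    have c2: "card Sb + 1 = card Vb" using st_card[OF ST(2) finEb finVb inWb Vbne] .
    have fin: "finite S'" "finite Sb" using sub1 finE' finEb finite_subset by blast+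
    have "card (S' \<union> Sb) = card S' + card Sb" using dis fin card_Un_disjoint[of S' Sb] by auto
    then have cU: "card (S' \<union> Sb) + 1 \<le> card V" using c1 c2 cardVb cardVV by simp
    have subE: "S' \<union> Sb \<subseteq> E" using sub1 EE EbE by blast
    have con: "\<forall>u\<in>V. \<forall>v\<in>V. reach ends (S' \<union> Sb) u v"
    proof (intro ballI)
      fix u v assume uv: "u \<in> V" "v \<in> V"
      have inb: "contr_map V' u \<in> Vb" "contr_map V' v \<in> Vb"
        using contr_map_in[OF uv(1)] contr_map_in[OF uv(2)] unfolding Vb_def by auto
      have r: "reach (contr_ends V' ends) Sb (contr_map V' u) (contr_map V' v)"
        using ST(2) inb unfolding spanning_tree_def eb_def by blast
      have s2: "Sb \<subseteq> contr_E E V' ends" using sub1(2) unfolding Eb_def .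
      have c': "\<forall>u\<in>V'. \<forall>v\<in>V'. reach ends S' u v" using ST(1) by (simp add: spanning_tree_def)
      have L: "\<forall>a b. contr_map V' a = contr_map V' u \<longrightarrow> contr_map V' b = contr_map V' v \<longrightarrow> reach ends (S' \<union> Sb) a b"
        by (rule contr_lift[OF r s2 c'])
      show "reach ends (S' \<union> Sb) u v" using L by simp
    qed
    have "inW ends V (S' \<union> Sb)" using inWE inW_subset[OF _ subE] by auto
    moreover have "finite (S' \<union> Sb)" using fin by simp
    ultimately have "\<not> has_cycle ends (S' \<union> Sb)"
      using connected_acyclic[OF _ finV _ Vne con cU] by auto
    then show ?thesis using dis con subE by (simp add: spanning_tree_def)
  qed
  show ?thesis
  proof (rule conjI; intro allI impI)
    fix S T assume a: "S \<inter> T = {} \<and> S \<union> T = E \<and> spanning_tree V E ends S \<and> spanning_tree V E ends T"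
    have p1: "spanning_tree V' E' ends (S \<inter> E') \<and> spanning_tree Vb Eb eb (S \<inter> Eb)"
      using part1[of S T] a by blast
    have p2: "spanning_tree V' E' ends (T \<inter> E') \<and> spanning_tree Vb Eb eb (T \<inter> Eb)"
      using part1[of T S] a by blast
    show "spanning_tree V' E' ends (S \<inter> E') \<and> spanning_tree V' E' ends (T \<inter> E') \<and>
       (S \<inter> E') \<inter> (T \<inter> E') = {} \<and>
       spanning_tree (contr_V V V') (contr_E E V' ends) (contr_ends V' ends) (S \<inter> contr_E E V' ends) \<and>
       spanning_tree (contr_V V V') (contr_E E V' ends) (contr_ends V' ends) (T \<inter> contr_E E V' ends) \<and>
       (S \<inter> contr_E E V' ends) \<inter> (T \<inter> contr_E E V' ends) = {}"
      using p1 p2 a unfolding Vb_def Eb_def eb_def by blast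
  next
    fix S' T' Sb Tb assume a: "S' \<inter> T' = {} \<and> spanning_tree V' E' ends S' \<and> spanning_tree V' E' ends T' \<and>
       Sb \<inter> Tb = {} \<and>
       spanning_tree (contr_V V V') (contr_E E V' ends) (contr_ends V' ends) Sb \<and>
       spanning_tree (contr_V V V') (contr_E E V' ends) (contr_ends V' ends) Tb"
    have p1: "S' \<inter> Sb = {} \<and> spanning_tree V E ends (S' \<union> Sb)"
      using part2[of S' Sb] a unfolding Vb_def Eb_def eb_def by blast
    have p2: "T' \<inter> Tb = {} \<and> spanning_tree V E ends (T' \<union> Tb)"
      using part2[of T' Tb] a unfolding Vb_def Eb_def eb_def by blast
    have s: "S' \<subseteq> E'" "T' \<subseteq> E'" "Sb \<subseteq> Eb" "Tb \<subseteq> Eb"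
      using a unfolding Vb_def Eb_def eb_def spanning_tree_def by blast+
    have "(S' \<union> Sb) \<inter> (T' \<union> Tb) = {}" using s a E'Eb by blast
    then show "S' \<inter> Sb = {} \<and> T' \<inter> Tb = {} \<and>
       spanning_tree V E ends (S' \<union> Sb) \<and> spanning_tree V E ends (T' \<union> Tb) \<and>
       (S' \<union> Sb) \<inter> (T' \<union> Tb) = {}" using p1 p2 by blast
  qed
qed

end
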